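(* Let $\ell^{\infty}$ be the space of bounded real sequences $x=(x_i)_{i\in\mathbb{N}}$, and for $p\in(0,\infty)$, $n\in\mathbb{N}$ let $$\|x\|_{\infty,p,n}:=\sup_{j\in\mathbb{N}}\Big(\frac{1}{n}\sum_{i=j}^{j+(n-1)}|x_i|^{p}\Big)^{1/p}.$$ Let $p\in[1,\infty)$ and $n,m\in\mathbb{N}$ with $n<m$. Then for all $x\in\ell^{\infty}$, $$\|x\|_{\infty,p,m}^{p}\leq \frac{(\lfloor m/n\rfloor+1)\,n}{m}\,\|x\|_{\infty,p,n}^{p}\leq 2\,\|x\|_{\infty,p,n}^{p}.$$
   Context: $\mathbb{N}=\{1,2,3,\dots\}$; $\lfloor\cdot\rfloor$ denotes the floor function. *)

theory Defs
  imports "HOL-Analysis.Analysis"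
begin

text \<open>Sequences are indexed by the positive naturals; x 0 is irrelevant.
  The windowed norm  sup_{j>=1} ((1/n) sum_{i=j}^{j+n-1} |x_i|^p)^(1/p).\<close>

definition win_norm :: "real \<Rightarrow> nat \<Rightarrow> (nat \<Rightarrow> real) \<Rightarrow> real" where
  "win_norm p n x =
     (SUP j\<in>{1..}. ((1 / real n) * (\<Sum>i=j..j+(n-1). \<bar>x i\<bar> powr p)) powr (1 / p))"

end

theory Submission
  imports Defs
begin

lemma block_sum:
  fixes g :: "nat \<Rightarrow> real"
  shows "sum g {a..<a+k*n} = (\<Sum>t<k. sum g {a+t*n..<a+t*n+n})"
proof (induction k)
  case 0 then show ?case by simp
next
  case (Suc k)
  have "sum g {a..<a+Suc k*n} = sum g {a..<a+k*n} + sum g {a+k*n..<a+k*n+n}"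
    using sum.atLeastLessThan_concat[of a "a+k*n" "a+k*n+n" g] by (simp add: algebra_simps)
  then show ?case using Suc by simp
qed

lemma ivl_eq: "1 \<le> (n::nat) \<Longrightarrow> {j..j+(n-1)} = {j..<j+n}"
  by auto

theorem lemma1p4:
  fixes x :: "nat \<Rightarrow> real" and p :: real and n m :: nat
  assumes "p \<ge> 1" and "1 \<le> n" and "n < m"
    and "bounded (x ` {1..})"
  shows "win_norm p m x powr p
           \<le> (real (m div n) + 1) * real n / real m * win_norm p n x powr p
         \<and> (real (m div n) + 1) * real n / real m * win_norm p n x powr p
           \<le> 2 * win_norm p n x powr p"
proof -
  define A where "A = (\<lambda>q j. (1 / real q) * (\<Sum>i=j..j+(q-1). \<bar>x i\<bar> powr p))"
  define N where "N = win_norm p n x"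
  define k where "k = m div n + 1"
  have p0: "p > 0" using assms by simp
  have A0: "A q j \<ge> 0" for q j unfolding A_def by (intro mult_nonneg_nonneg sum_nonneg) auto
  obtain B where B: "\<And>i. i \<ge> 1 \<Longrightarrow> \<bar>x i\<bar> \<le> B"
    using assms(4) unfolding bounded_iff by fastforce
  have B0: "B \<ge> 0" using B[of 1] by simp
  have Abd: "A n j \<le> B powr p" if "j \<ge> 1" for j
  proof -
    have "(\<Sum>i=j..j+(n-1). \<bar>x i\<bar> powr p) \<le> (\<Sum>i=j..j+(n-1). B powr p)"
      using that by (intro sum_mono powr_mono2) (auto intro: B simp: p0 less_imp_le)
    also have "\<dots> = real n * B powr p" using assms(2) by simp
    finally show ?thesis unfolding A_def using assms(2)
      by (simp add: field_simps)
  qed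
  have bdd: "bdd_above ((\<lambda>j. A n j powr (1/p)) ` {1..})"
  proof (rule bdd_aboveI2)
    fix j :: nat assume "j \<in> {1..}"
    then have "A n j powr (1/p) \<le> (B powr p) powr (1/p)"
      using Abd[of j] A0 p0 by (intro powr_mono2) auto
    also have "\<dots> = B" using B0 p0 by (simp add: powr_powr)
    finally show "A n j powr (1/p) \<le> B" .
  qed
  have WN: "win_norm p q x = (SUP j\<in>{1..}. A q j powr (1/p))" for q
    unfolding win_norm_def A_def ..
  have Nsup: "N = (SUP j\<in>{1..}. A n j powr (1/p))"
    unfolding N_def win_norm_def A_def ..
  have fle: "A n j powr (1/p) \<le> N" if "j \<ge> 1" for j
    unfolding Nsup using bdd that by (intro cSUP_upper) auto
  have N0: "N \<ge> 0" using fle[of 1] by (meson order.trans powr_ge_zero order_refl)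
  have AleN: "A n j \<le> N powr p" if "j \<ge> 1" for j
  proof -
    have "A n j = (A n j powr (1/p)) powr p" using A0[of n j] p0 by (simp add: powr_powr)
    also have "\<dots> \<le> N powr p" using fle[OF that] p0 by (intro powr_mono2) auto
    finally show ?thesis .
  qed
  have kn: "m < k * n" unfolding k_def using assms(2)
    by (metis add.commute div_mult_mod_eq mod_less_divisor mult_Suc nat_add_left_cancel_less
        less_le_trans le_add2 plus_1_eq_Suc zero_less_one)
  define C where "C = real k * real n / real m"
  have m0: "real m > 0" using assms by simp
  have Am: "A m j \<le> C * N powr p" if "j \<ge> 1" for j
  proof -
    let ?g = "\<lambda>i. \<bar>x i\<bar> powr p"
    have "(\<Sum>i=j..j+(m-1). ?g i) = sum ?g {j..<j+m}" using assms ivl_eq[of m j] by simp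
    also have "\<dots> \<le> sum ?g {j..<j+k*n}" using kn by (intro sum_mono2) auto
    also have "\<dots> = (\<Sum>t<k. sum ?g {j+t*n..<j+t*n+n})" by (rule block_sum)
    also have "\<dots> = (\<Sum>t<k. real n * A n (j+t*n))"
      unfolding A_def using assms(2) ivl_eq[of n] by (intro sum.cong) auto
    also have "\<dots> \<le> (\<Sum>t<k. real n * N powr p)"
      using that by (intro sum_mono mult_left_mono AleN) auto
    also have "\<dots> = real k * real n * N powr p" by simp
    finally have "(\<Sum>i=j..j+(m-1). ?g i) \<le> real k * real n * N powr p" .
    then show ?thesis unfolding A_def C_def using m0 by (simp add: field_simps)
  qed
  have M: "win_norm p m x \<le> (C * N powr p) powr (1/p)"
    unfolding WN
  proof (rule cSUP_least)
    show "{1::nat..} \<noteq> {}" by auto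
    fix j :: nat assume "j \<in> {1..}"
    then show "A m j powr (1/p) \<le> (C * N powr p) powr (1/p)"
      using Am[of j] A0 p0 by (intro powr_mono2) auto
  qed
  have C0: "C \<ge> 0" unfolding C_def by simp
  have M0: "win_norm p m x \<ge> 0"
  proof -
    have "A m 1 powr (1/p) \<le> win_norm p m x"
    proof -
      have bm: "bdd_above ((\<lambda>j. A m j powr (1/p)) ` {1..})"
      proof (rule bdd_aboveI2)
        fix j :: nat assume "j \<in> {1..}"
        then show "A m j powr (1/p) \<le> (C * N powr p) powr (1/p)"
          using Am[of j] A0 p0 by (intro powr_mono2) auto
      qed
      show ?thesis unfolding WN
        using bm by (intro cSUP_upper) auto
    qed
    then show ?thesis by (meson order.trans powr_ge_zero)
  qed
  have first: "win_norm p m x powr p \<le> C * N powr p"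
  proof -
    have "win_norm p m x powr p \<le> ((C * N powr p) powr (1/p)) powr p"
      using M M0 p0 by (intro powr_mono2) auto
    also have "\<dots> = C * N powr p" using C0 p0 by (simp add: powr_powr)
    finally show ?thesis .
  qed
  have C2: "C \<le> 2"
  proof -
    have "(m div n) * n \<le> m" by (metis div_mult_mod_eq le_add1)
    then have "k * n \<le> 2 * m" 
    proof -
      have "k * n = m div n * n + n" unfolding k_def by simp
      then show ?thesis using \<open>(m div n) * n \<le> m\<close> assms(3) by linarith
    qed
    then have "real k * real n \<le> 2 * real m" by (metis of_nat_le_iff of_nat_mult of_nat_numeral)
    then show ?thesis unfolding C_def using m0 by (simp add: field_simps)
  qed
  have Ceq: "(real (m div n) + 1) * real n / real m = C" unfolding C_def k_def by simp
  show ?thesis unfolding Ceq N_def[symmetric]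
    using first C2 by (auto intro: mult_right_mono)
qed

end
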